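(* For all $j_1,j_2\in\tfrac12\mathbb{N}^+$, every entry of $R^{(j_1,j_2)}(t)$ (a Laurent polynomial in $t$) has degree at most $4j_1j_2$ in $t$, and \[ \lim_{t\to\infty}\frac{R^{(j_1,j_2)}(t)}{t^{4j_1j_2}}=q^{2j_1j_2}\widehat R^{(j_1,j_2)}, \] i.e. the matrix of coefficients of $t^{4j_1j_2}$ in $R^{(j_1,j_2)}(t)$ equals $q^{2j_1j_2}\widehat R^{(j_1,j_2)}$.
   Context: $\mathbb{F}$ is a field of characteristic zero in which every element has a square root; $q\in\mathbb{F}$ nonzero, not a root of unity, with fixed square root $q^{1/2}$ ($q^{k/2}:=(q^{1/2})^k$); other $(\cdot)^{1/2}$ are fixed square roots in $\mathbb{F}$. $[n]_q=\frac{q^n-q^{-n}}{q-q^{-1}}$, $c(t)=t-t^{-1}$, $\tfrac12\mathbb{N}^+=\{\tfrac12,1,\tfrac32,\dots\}$, $t$ an indeterminate, $\otimes$ Kronecker product. Leg notation: for factors $\mathbb{F}^{n_1}\otimes\mathbb{F}^{n_2}\otimes\mathbb{F}^{n_3}$, $X_{12}=X\otimes I_{n_3}$, $X_{23}=I_{n_1}\otimes X$, $X_{13}=P(X\otimes I_{n_2})P$ with $P$ the flip of factors 2,3; for non-square $Y$, $Y_{12}=Y\otimes I_{n_3}$, $Y_{23}=I_{n_1}\otimes Y$. For $j\in\tfrac12\mathbb{N}^+$: $\mathcal{E}^{(j+\frac12)}$ is $(4j+2)\times(2j+2)$ with only nonzero entries $\mathcal{E}_{(a,a)}=\big(\frac{[2j+2-a]_q}{[2j+1]_q}\big)^{1/2}$,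 $\mathcal{E}_{(a+2j+1,a+1)}=\big(\frac{[a]_q}{[2j+1]_q}\big)^{1/2}$ ($1\le a\le 2j+1$); $\mathcal{F}^{(j+\frac12)}$ is $(2j+2)\times(4j+2)$ with only nonzero entries $\mathcal{F}_{(a,a)}=\frac{([2j+2-a]_q[2j+1]_q)^{1/2}}{[2j+2-a]_q+[a-1]_q}$, $\mathcal{F}_{(a+1,a+2j+1)}=\frac{([a]_q[2j+1]_q)^{1/2}}{[2j+1-a]_q+[a]_q}$ ($1\le a\le 2j+1$). $R^{(\frac12,\frac12)}(t)$ is the $4\times4$ matrix with rows $(c(qt),0,0,0),(0,c(t),c(q),0),(0,c(q),c(t),0),(0,0,0,c(qt))$; recursively $R^{(\frac12,j+\frac12)}(t)=\mathcal{F}^{(j+\frac12)}_{23}R^{(\frac12,j)}_{13}(q^{-1/2}t)R^{(\frac12,\frac12)}_{12}(q^{j}t)\mathcal{E}^{(j+\frac12)}_{23}$ (factor sizes $2,2,2j+1$) and $R^{(j_1+\frac12,j_2)}(t)=\mathcal{F}^{(j_1+\frac12)}_{12}R^{(\frac12,j_2)}_{13}(q^{-j_1}t)R^{(j_1,j_2)}_{23}(q^{1/2}t)\mathcal{E}^{(j_1+\frac12)}_{12}$ (factor sizes $2,2j_1+1,2j_2+1$). $\widehat R^{(j_1,j_2)}=q^{2\,\mathrm{diag}(j_1,\dots,-j_1)\otimes\mathrm{diag}(j_2,\dots,-j_2)}$ (diagonal with entries $q^{2\alpha\beta}$). *)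

theory Defs
  imports "HOL-Computational_Algebra.Formal_Laurent_Series" "Jordan_Normal_Form.Matrix"
begin

text \<open>Matrices are Jordan_Normal_Form matrices, indices are 0-based.
  The Kronecker product uses the standard (lexicographic) index ordering.\<close>

definition kron :: "'a::times mat \<Rightarrow> 'a mat \<Rightarrow> 'a mat" where
  "kron A B = mat (dim_row A * dim_row B) (dim_col A * dim_col B)
     (\<lambda>(i,j). A $$ (i div dim_row B, j div dim_col B) * B $$ (i mod dim_row B, j mod dim_col B))"

text \<open>Flip of tensor factors 2 and 3: the linear map
  F^n1 (x) F^n2 (x) F^n3 -> F^n1 (x) F^n3 (x) F^n2, v1 (x) v2 (x) v3 |-> v1 (x) v3 (x) v2.\<close>
definition flipP :: "nat \<Rightarrow> nat \<Rightarrow> nat \<Rightarrow> 'a::{zero,one} mat" where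
  "flipP n1 n2 n3 = mat (n1*n2*n3) (n1*n2*n3)
     (\<lambda>(r,c). let i1 = c div (n2*n3); i2 = (c div n3) mod n2; i3 = c mod n3
              in if r = i1*(n3*n2) + i3*n2 + i2 then 1 else 0)"

definition leg12 :: "nat \<Rightarrow> 'a::semiring_1 mat \<Rightarrow> 'a mat" where
  "leg12 n3 X = kron X (1\<^sub>m n3)"

definition leg23 :: "nat \<Rightarrow> 'a::semiring_1 mat \<Rightarrow> 'a mat" where
  "leg23 n1 X = kron (1\<^sub>m n1) X"

definition leg13 :: "nat \<Rightarrow> nat \<Rightarrow> nat \<Rightarrow> 'a::semiring_1 mat \<Rightarrow> 'a mat" where
  "leg13 n1 n2 n3 X = flipP n1 n3 n2 * kron X (1\<^sub>m n2) * flipP n1 n2 n3"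


definition qint :: "'a::field \<Rightarrow> nat \<Rightarrow> 'a" where
  "qint q n = (q ^ n - inverse q ^ n) / (q - inverse q)"

text \<open>Spins j are encoded by n = 2j (a positive natural number); so E^{(j+1/2)} is
  Emat sq q n with n = 2j, of size (2n+2) x (n+2).
  The square roots (X Y)^{1/2} and (X/Y)^{1/2} of products/quotients of q-numbers are read as
  sq X * sq Y and sq X / sq Y, for the fixed square root function sq.\<close>

definition Emat :: "('a::field \<Rightarrow> 'a) \<Rightarrow> 'a \<Rightarrow> nat \<Rightarrow> 'a fls mat" where
  "Emat sq q n = mat (2*n+2) (n+2) (\<lambda>(r,c).
     if r < n+1 \<and> c = r then fls_const (sq (qint q (n+1-r)) / sq (qint q (n+1)))
     else if n+1 \<le> r \<and> r < 2*n+2 \<and> c = r - n then fls_const (sq (qint q (r-n)) / sq (qint q (n+1)))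
     else 0)"

definition Fmat :: "('a::field \<Rightarrow> 'a) \<Rightarrow> 'a \<Rightarrow> nat \<Rightarrow> 'a fls mat" where
  "Fmat sq q n = mat (n+2) (2*n+2) (\<lambda>(r,c).
     if c < n+1 \<and> r = c then
       fls_const (sq (qint q (n+1-c)) * sq (qint q (n+1)) / (qint q (n+1-c) + qint q c))
     else if n+1 \<le> c \<and> c < 2*n+2 \<and> r = c - n then
       fls_const (sq (qint q (c-n)) * sq (qint q (n+1)) / (qint q (2*n+1-c) + qint q (c-n)))
     else 0)"

definition cfun :: "'a::field \<Rightarrow> 'a fls" where
  "cfun s = fls_const s * fls_X - fls_const (inverse s) * fls_X_inv"
  \<comment> \<open>c(s t) = s t - (s t)^{-1} as a Laurent polynomial in t\<close>

definition Rbase :: "'a::field \<Rightarrow> 'a \<Rightarrow> 'a fls mat" where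
  "Rbase q s = mat 4 4 (\<lambda>(r,c).
     if (r = 0 \<and> c = 0) \<or> (r = 3 \<and> c = 3) then cfun (q*s)
     else if (r = 1 \<and> c = 1) \<or> (r = 2 \<and> c = 2) then cfun s
     else if (r = 1 \<and> c = 2) \<or> (r = 2 \<and> c = 1) then fls_const (q - inverse q)
     else 0)"

text \<open>Rmat sq q qh n1 n2 s = R^{(n1/2, n2/2)}(s t), the matrix of Laurent polynomials in t
  (qh is the fixed square root of q). Values with n1 = 0 or n2 = 0 are junk.\<close>
fun Rmat :: "('a::field \<Rightarrow> 'a) \<Rightarrow> 'a \<Rightarrow> 'a \<Rightarrow> nat \<Rightarrow> nat \<Rightarrow> 'a \<Rightarrow> 'a fls mat" where
  "Rmat sq q qh (Suc 0) (Suc 0) s = Rbase q s"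
| "Rmat sq q qh (Suc 0) (Suc (Suc n)) s =
     leg23 2 (Fmat sq q (Suc n))
     * leg13 2 2 (Suc (Suc n)) (Rmat sq q qh (Suc 0) (Suc n) (inverse qh * s))
     * leg12 (Suc (Suc n)) (Rmat sq q qh (Suc 0) (Suc 0) (qh ^ Suc n * s))
     * leg23 2 (Emat sq q (Suc n))"
| "Rmat sq q qh (Suc (Suc m)) n2 s =
     leg12 (n2+1) (Fmat sq q (Suc m))
     * leg13 2 (Suc (Suc m)) (n2+1) (Rmat sq q qh (Suc 0) n2 (inverse qh ^ Suc m * s))
     * leg23 2 (Rmat sq q qh (Suc m) n2 (qh * s))
     * leg12 (n2+1) (Emat sq q (Suc m))"
| "Rmat sq q qh 0 n2 s = 0\<^sub>m 1 1"
| "Rmat sq q qh (Suc 0) 0 s = 0\<^sub>m 1 1"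

text \<open>Rhat^{(n1/2,n2/2)}: diagonal with entries q^{2 alpha beta}, alpha = n1/2 - i, beta = n2/2 - k,
  in Kronecker order (i,k); q^{2 alpha beta} = qh^{(n1-2i)(n2-2k)}.\<close>
definition Rhat :: "'a::field \<Rightarrow> nat \<Rightarrow> nat \<Rightarrow> 'a mat" where
  "Rhat qh n1 n2 = mat ((n1+1)*(n2+1)) ((n1+1)*(n2+1)) (\<lambda>(r,c).
     if r = c then qh powi ((int n1 - 2 * int (r div (n2+1))) * (int n2 - 2 * int (r mod (n2+1))))
     else 0)"

end

theory Submission
  imports Defs
begin


lemma fls_top:
  fixes f g :: "'a::field fls"
  assumes f: "\<And>k. k > a \<Longrightarrow> fls_nth f k = 0" and g: "\<And>k. k > b \<Longrightarrow> fls_nth g k = 0"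
  shows "k > a + b \<Longrightarrow> fls_nth (f*g) k = 0"
    and "fls_nth (f*g) (a+b) = fls_nth f a * fls_nth g b"
proof -
  have gen: "fls_nth (f*g) n = (\<Sum>i=fls_subdegree f..n - fls_subdegree g. if i = a \<and> n = a + b then fls_nth f a * fls_nth g b else 0)" 
    if "n \<ge> a + b" for n
    unfolding fls_times_nth(2)
  proof (rule sum.cong[OF refl])
    fix i assume "i \<in> {fls_subdegree f..n - fls_subdegree g}"
    show "fls_nth f i * fls_nth g (n - i) = (if i = a \<and> n = a + b then fls_nth f a * fls_nth g b else 0)"
    proof (cases "i = a \<and> n = a + b")
      case True thus ?thesis by simp
    next
      case False
      hence "i > a \<or> n - i > b" using that by auto
      thus ?thesis using False f g by auto
    qed
  qed
  show "k > a + b \<Longrightarrow> fls_nth (f*g) k = 0" using gen[of k] by simp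
  have "fls_nth (f*g) (a+b) = (\<Sum>i=fls_subdegree f..a + b - fls_subdegree g. if i = a then fls_nth f a * fls_nth g b else 0)"
    using gen[of "a+b"] by simp
  also have "\<dots> = fls_nth f a * fls_nth g b"
  proof (cases "fls_nth f a * fls_nth g b = 0")
    case True thus ?thesis by simp
  next
    case False
    hence "fls_nth f a \<noteq> 0" "fls_nth g b \<noteq> 0" by auto
    hence "fls_subdegree f \<le> a" "fls_subdegree g \<le> b" by (auto intro: fls_subdegree_leI)
    thus ?thesis by (simp add: sum.delta sum.delta')
  qed
  finally show "fls_nth (f*g) (a+b) = fls_nth f a * fls_nth g b" .
qed

definition bnd :: "int \<Rightarrow> 'a::field fls mat \<Rightarrow> bool" where
  "bnd d M = (\<forall>i<dim_row M. \<forall>j<dim_col M. \<forall>k>d. fls_nth (M$$(i,j)) k = 0)"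

definition lc :: "int \<Rightarrow> 'a::field fls mat \<Rightarrow> 'a mat" where
  "lc d M = map_mat (\<lambda>f. fls_nth f d) M"

lemma lc_dims[simp]: "dim_row (lc d M) = dim_row M" "dim_col (lc d M) = dim_col M"
  by (auto simp: lc_def)

lemma mult_entry:
  "i < dim_row A \<Longrightarrow> j < dim_col B \<Longrightarrow> dim_col A = dim_row B \<Longrightarrow>
   (A * B) $$ (i,j) = (\<Sum>k<dim_col A. A $$ (i,k) * B $$ (k,j))"
  by (simp add: scalar_prod_def lessThan_atLeast0)

lemma bnd_mult:
  fixes A B :: "'a::field fls mat"
  assumes A: "bnd a A" and B: "bnd b B" and d: "dim_col A = dim_row B" and c: "c = a + b"
  shows "bnd c (A * B)" "lc c (A * B) = lc a A * lc b B"
proof -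
  have ent: "\<And>i j. i < dim_row A \<Longrightarrow> j < dim_col B \<Longrightarrow>
       (\<forall>k > c. fls_nth ((A*B)$$(i,j)) k = 0) \<and> fls_nth ((A*B)$$(i,j)) c = (lc a A * lc b B) $$ (i,j)"
  proof -
    fix i j assume i: "i < dim_row A" and j: "j < dim_col B"
    have fa: "\<And>k l. k < dim_col A \<Longrightarrow> l > a \<Longrightarrow> fls_nth (A$$(i,k)) l = 0" using A i unfolding bnd_def by auto
    have fb: "\<And>k l. k < dim_col A \<Longrightarrow> l > b \<Longrightarrow> fls_nth (B$$(k,j)) l = 0" using B j d unfolding bnd_def by auto
    have "(lc a A * lc b B) $$ (i,j) = (\<Sum>k<dim_col A. fls_nth (A$$(i,k)) a * fls_nth (B$$(k,j)) b)"
      using i j d by (subst mult_entry) (auto simp: lc_def)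
    moreover have "fls_nth ((A*B)$$(i,j)) l = (\<Sum>k<dim_col A. fls_nth (A$$(i,k) * B$$(k,j)) l)" for l
      using i j d by (subst mult_entry) (auto simp: fls_nth_sum)
    ultimately show "(\<forall>k > c. fls_nth ((A*B)$$(i,j)) k = 0) \<and> fls_nth ((A*B)$$(i,j)) c = (lc a A * lc b B) $$ (i,j)"
      using fls_top[OF fa fb] c by simp
  qed
  show "bnd c (A * B)" unfolding bnd_def using ent by simp
  show "lc c (A * B) = lc a A * lc b B"
    by (rule eq_matI) (use ent d in \<open>auto simp: lc_def\<close>)
qed

lemma kron_dims[simp]: "dim_row (kron A B) = dim_row A * dim_row B" "dim_col (kron A B) = dim_col A * dim_col B"
  by (auto simp: kron_def)

lemma kron_entry:
  "i < dim_row A * dim_row B \<Longrightarrow> j < dim_col A * dim_col B \<Longrightarrow>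
   kron A B $$ (i,j) = A $$ (i div dim_row B, j div dim_col B) * B $$ (i mod dim_row B, j mod dim_col B)"
  by (simp add: kron_def)

lemma div_lt: "(i::nat) < a * b \<Longrightarrow> i div b < a"
  by (simp add: less_mult_imp_div_less)
lemma mod_lt: "(i::nat) < a * b \<Longrightarrow> i mod b < b"
  by (metis mod_less_divisor mult_zero_right not_gr_zero not_less_zero)

lemma bnd_kron:
  fixes A B :: "'a::field fls mat"
  assumes A: "bnd a A" and B: "bnd b B" and c: "c = a + b"
  shows "bnd c (kron A B)" "lc c (kron A B) = kron (lc a A) (lc b B)"
proof -
  have ent: "\<And>i j. i < dim_row A * dim_row B \<Longrightarrow> j < dim_col A * dim_col B \<Longrightarrow>
       (\<forall>k > c. fls_nth (kron A B $$(i,j)) k = 0) \<and> fls_nth (kron A B $$(i,j)) c = kron (lc a A) (lc b B) $$ (i,j)"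
  proof -
    fix i j assume i: "i < dim_row A * dim_row B" and j: "j < dim_col A * dim_col B"
    have fa: "\<And>l. l > a \<Longrightarrow> fls_nth (A$$(i div dim_row B, j div dim_col B)) l = 0" using A div_lt[OF i] div_lt[OF j] unfolding bnd_def by auto
    have fb: "\<And>l. l > b \<Longrightarrow> fls_nth (B$$(i mod dim_row B, j mod dim_col B)) l = 0" using B mod_lt[OF i] mod_lt[OF j] unfolding bnd_def by auto
    show "(\<forall>k > c. fls_nth (kron A B $$(i,j)) k = 0) \<and> fls_nth (kron A B $$(i,j)) c = kron (lc a A) (lc b B) $$ (i,j)"
      using fls_top[OF fa fb] c i j div_lt[OF i] div_lt[OF j] mod_lt[OF i] mod_lt[OF j]
      by (simp add: kron_entry lc_def)
  qed
  show "bnd c (kron A B)" unfolding bnd_def using ent by simp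
  show "lc c (kron A B) = kron (lc a A) (lc b B)"
    by (rule eq_matI) (use ent in \<open>auto simp: lc_def\<close>)
qed

lemma bnd_const: "bnd 0 (map_mat fls_const X)" "lc 0 (map_mat fls_const X) = X"
  by (auto simp: bnd_def lc_def intro!: eq_matI)

lemma one_const: "(1\<^sub>m n :: 'a::field fls mat) = map_mat fls_const (1\<^sub>m n)"
  by (rule eq_matI) auto

lemma flip_const: "(flipP n1 n2 n3 :: 'a::field fls mat) = map_mat fls_const (flipP n1 n2 n3)"
  by (rule eq_matI) (auto simp: flipP_def Let_def)

definition E0 :: "('a::field \<Rightarrow> 'a) \<Rightarrow> 'a \<Rightarrow> nat \<Rightarrow> 'a mat" where
  "E0 sq q n = mat (2*n+2) (n+2) (\<lambda>(r,c).
     if r < n+1 \<and> c = r then sq (qint q (n+1-r)) / sq (qint q (n+1))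
     else if n+1 \<le> r \<and> r < 2*n+2 \<and> c = r - n then sq (qint q (r-n)) / sq (qint q (n+1))
     else 0)"

definition F0 :: "('a::field \<Rightarrow> 'a) \<Rightarrow> 'a \<Rightarrow> nat \<Rightarrow> 'a mat" where
  "F0 sq q n = mat (n+2) (2*n+2) (\<lambda>(r,c).
     if c < n+1 \<and> r = c then
       sq (qint q (n+1-c)) * sq (qint q (n+1)) / (qint q (n+1-c) + qint q c)
     else if n+1 \<le> c \<and> c < 2*n+2 \<and> r = c - n then
       sq (qint q (c-n)) * sq (qint q (n+1)) / (qint q (2*n+1-c) + qint q (c-n))
     else 0)"

lemma Emat_const: "Emat sq q n = map_mat fls_const (E0 sq q n)"
  by (rule eq_matI) (auto simp: Emat_def E0_def)

lemma Fmat_const: "Fmat sq q n = map_mat fls_const (F0 sq q n)"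
  by (rule eq_matI) (auto simp: Fmat_def F0_def)

lemma E0_dims[simp]: "dim_row (E0 sq q n) = 2*n+2" "dim_col (E0 sq q n) = n+2"
  by (auto simp: E0_def)
lemma F0_dims[simp]: "dim_row (F0 sq q n) = n+2" "dim_col (F0 sq q n) = 2*n+2"
  by (auto simp: F0_def)
lemma Emat_dims[simp]: "dim_row (Emat sq q n) = 2*n+2" "dim_col (Emat sq q n) = n+2"
  by (auto simp: Emat_def)
lemma Fmat_dims[simp]: "dim_row (Fmat sq q n) = n+2" "dim_col (Fmat sq q n) = 2*n+2"
  by (auto simp: Fmat_def)
lemma flipP_dims[simp]: "dim_row (flipP n1 n2 n3) = n1*n2*n3" "dim_col (flipP n1 n2 n3) = n1*n2*n3"
  by (auto simp: flipP_def)

lemma bnd_one: "bnd 0 (1\<^sub>m n :: 'a::field fls mat)"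
  by (auto simp: bnd_def)
lemma lc_one: "lc 0 (1\<^sub>m n :: 'a::field fls mat) = 1\<^sub>m n"
  by (rule eq_matI) (auto simp: lc_def)

lemma bnd_leg12:
  fixes X :: "'a::field fls mat"
  assumes "bnd a X"
  shows "bnd a (leg12 n X)" "lc a (leg12 n X) = kron (lc a X) (1\<^sub>m n)"
  using assms unfolding leg12_def bnd_def lc_def
  by (auto simp: kron_entry div_lt mod_lt intro!: eq_matI)

lemma bnd_leg23:
  fixes X :: "'a::field fls mat"
  assumes "bnd a X"
  shows "bnd a (leg23 n X)" "lc a (leg23 n X) = kron (1\<^sub>m n) (lc a X)"
  using assms unfolding leg23_def bnd_def lc_def
  by (auto simp: kron_entry div_lt mod_lt intro!: eq_matI)

lemma bnd_leg13:
  fixes X :: "'a::field fls mat"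
  assumes X: "bnd a X" and dX: "dim_row X = n1*n3" "dim_col X = n1*n3"
  shows "bnd a (leg13 n1 n2 n3 X)"
    "lc a (leg13 n1 n2 n3 X) = flipP n1 n3 n2 * kron (lc a X) (1\<^sub>m n2) * flipP n1 n2 n3"
proof -
  have k: "bnd a (kron X (1\<^sub>m n2))" "lc a (kron X (1\<^sub>m n2)) = kron (lc a X) (1\<^sub>m n2)"
    using bnd_leg12[OF X, of n2] unfolding leg12_def by auto
  have f1: "bnd 0 (flipP n1 n3 n2 :: 'a fls mat)" "lc 0 (flipP n1 n3 n2 :: 'a fls mat) = flipP n1 n3 n2"
    using bnd_const[of "flipP n1 n3 n2"] by (auto simp: flip_const[symmetric])
  have f2: "bnd 0 (flipP n1 n2 n3 :: 'a fls mat)" "lc 0 (flipP n1 n2 n3 :: 'a fls mat) = flipP n1 n2 n3"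
    using bnd_const[of "flipP n1 n2 n3"] by (auto simp: flip_const[symmetric])
  have m1: "bnd a (flipP n1 n3 n2 * kron X (1\<^sub>m n2))"
    "lc a (flipP n1 n3 n2 * kron X (1\<^sub>m n2)) = flipP n1 n3 n2 * kron (lc a X) (1\<^sub>m n2)"
    using bnd_mult[OF f1(1) k(1)] dX f1(2) k(2) by auto
  show "bnd a (leg13 n1 n2 n3 X)"
    "lc a (leg13 n1 n2 n3 X) = flipP n1 n3 n2 * kron (lc a X) (1\<^sub>m n2) * flipP n1 n2 n3"
    using bnd_mult[OF m1(1) f2(1)] m1(2) f2(2) dX unfolding leg13_def by (auto simp: mult_ac)
qed

definition dmat :: "nat \<Rightarrow> (nat \<Rightarrow> 'a::semiring_1) \<Rightarrow> 'a mat" where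
  "dmat n f = mat n n (\<lambda>(i,j). if i = j then f i else 0)"

lemma dmat_dims[simp]: "dim_row (dmat n f) = n" "dim_col (dmat n f) = n"
  by (auto simp: dmat_def)

lemma smult_dmat: "c \<cdot>\<^sub>m dmat n f = dmat n (\<lambda>i. c * f i)"
  by (rule eq_matI) (auto simp: dmat_def)

lemma sum_delta_mult: "(\<Sum>k<(n::nat). (if i = k then a k else 0) * b k) = (if i < n then a i * (b i::'a::semiring_1) else 0)"
proof -
  have "(\<Sum>k<n. (if i = k then a k else 0) * b k) = (\<Sum>k<n. if i = k then a k * b k else 0)"
    by (rule sum.cong) auto
  thus ?thesis by (simp add: sum.delta sum.delta')
qed

lemma sum_delta_mult': "(\<Sum>k<(n::nat). b k * (if k = j then a k else 0)) = (if j < n then b j * (a j::'a::semiring_1) else 0)"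
proof -
  have "(\<Sum>k<n. b k * (if k = j then a k else 0)) = (\<Sum>k<n. if j = k then b k * a k else 0)"
    by (rule sum.cong) auto
  thus ?thesis by (simp add: sum.delta sum.delta')
qed

lemma dmat_mult_left: "dim_row M = n \<Longrightarrow> dmat n f * M = mat n (dim_col M) (\<lambda>(i,j). f i * M $$ (i,j))"
  by (rule eq_matI) (auto simp: mult_entry dmat_def sum_delta_mult simp del: index_mult_mat(1))

lemma dmat_mult_right: "dim_col M = n \<Longrightarrow> M * dmat n f = mat (dim_row M) n (\<lambda>(i,j). M $$ (i,j) * f j)"
  by (rule eq_matI) (auto simp: mult_entry dmat_def sum_delta_mult' simp del: index_mult_mat(1))

lemma dmat_mult: "dmat n f * dmat n g = dmat n (\<lambda>i. f i * g i)"
  by (subst dmat_mult_left) (auto simp: dmat_def intro!: eq_matI)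

lemma dmat_comm:
  fixes M :: "'a::comm_semiring_1 mat"
  assumes "dim_row M = n" "dim_col M = m"
    and "\<And>r c. r < n \<Longrightarrow> c < m \<Longrightarrow> M $$ (r,c) \<noteq> 0 \<Longrightarrow> d r = d' c"
  shows "dmat n d * M = M * dmat m d'"
proof (rule eq_matI)
  fix i j assume "i < dim_row (M * dmat m d')" "j < dim_col (M * dmat m d')"
  hence ij: "i < n" "j < m" using assms by auto
  show "(dmat n d * M) $$ (i, j) = (M * dmat m d') $$ (i, j)"
  proof (cases "M $$ (i,j) = 0")
    case True thus ?thesis using assms ij by (simp add: dmat_mult_left dmat_mult_right)
  next
    case False thus ?thesis using assms(3)[OF ij False] assms ij by (simp add: dmat_mult_left dmat_mult_right mult.commute)
  qed
qed (use assms in \<open>auto simp: dmat_mult_left dmat_mult_right\<close>)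


lemma dm: "(b::nat) < m \<Longrightarrow> (a*m + b) div m = a" "(b::nat) < m \<Longrightarrow> (a*m + b) mod m = b"
  by auto
lemma lt2: "(i2::nat) < n2 \<Longrightarrow> i3 < n3 \<Longrightarrow> i2*n3 + i3 < n2*n3"
proof -
  assume a: "i2 < n2" "i3 < n3"
  have "i2*n3 + i3 < i2*n3 + n3" using a by simp
  also have "\<dots> = (i2+1)*n3" by simp
  also have "\<dots> \<le> n2*n3" using a by (intro mult_le_mono1) simp
  finally show ?thesis .
qed
lemma idx3:
  assumes "(i2::nat) < n2" "i3 < n3"
  shows "(i1*(n2*n3) + i2*n3 + i3) div (n2*n3) = i1"
    "(i1*(n2*n3) + i2*n3 + i3) mod n3 = i3"
    "(i1*(n2*n3) + i2*n3 + i3) div n3 = i1*n2 + i2"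
    "(i1*(n2*n3) + i2*n3 + i3) mod (n2*n3) = i2*n3 + i3"
proof -
  have l: "i2*n3 + i3 < n2*n3" using lt2 assms .
  have e1: "i1*(n2*n3) + i2*n3 + i3 = i1*(n2*n3) + (i2*n3 + i3)" by simp
  show "(i1*(n2*n3) + i2*n3 + i3) div (n2*n3) = i1" unfolding e1 using dm(1)[OF l] .
  show "(i1*(n2*n3) + i2*n3 + i3) mod (n2*n3) = i2*n3 + i3" unfolding e1 using dm(2)[OF l] .
  have e2: "i1*(n2*n3) + i2*n3 + i3 = (i1*n2 + i2)*n3 + i3" by (simp add: algebra_simps)
  show "(i1*(n2*n3) + i2*n3 + i3) mod n3 = i3" unfolding e2 using dm(2) assms by blast
  show "(i1*(n2*n3) + i2*n3 + i3) div n3 = i1*n2 + i2" unfolding e2 using dm(1) assms by blast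
qed
lemma decomp3:
  assumes "(c::nat) < n1*n2*n3"
  obtains i1 i2 i3 where "i1 < n1" "i2 < n2" "i3 < n3" "c = i1*(n2*n3) + i2*n3 + i3"
proof -
  have p: "0 < n3" "0 < n2" using assms by (auto intro: gr0I)
  let ?i1 = "c div (n2*n3)" and ?i2 = "(c div n3) mod n2" and ?i3 = "c mod n3"
  have "c = ?i1*(n2*n3) + c mod (n2*n3)" by (rule div_mult_mod_eq[symmetric])
  also have "c mod (n2*n3) = n3 * ?i2 + ?i3" using mod_mult2_eq[of c n3 n2] by (simp add: mult.commute)
  finally have "c = ?i1*(n2*n3) + ?i2*n3 + ?i3" by (simp add: algebra_simps)
  moreover have "?i1 < n1" using assms by (simp add: less_mult_imp_div_less mult.assoc)
  moreover have "?i2 < n2" "?i3 < n3" using p by auto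
  ultimately show ?thesis using that by blast
qed
lemma sum_split_prod: "(\<Sum>k<a*b. g k) = (\<Sum>k1<a. \<Sum>k2<(b::nat). g (k1*b+k2))"
proof -
  have "(\<Sum>k1<a. \<Sum>k2<b. g (k1*b+k2)) = (\<Sum>(k1,k2)\<in>{..<a}\<times>{..<b}. g (k1*b+k2))"
    by (simp add: sum.cartesian_product)
  also have "\<dots> = (\<Sum>k<a*b. g k)"
  proof (rule sum.reindex_bij_witness[where i="\<lambda>k. (k div b, k mod b)" and j="\<lambda>(k1,k2). k1*b+k2"])
    fix k assume "k \<in> {..<a*b}"
    thus "(k div b, k mod b) \<in> {..<a}\<times>{..<b}"
      by (auto simp: less_mult_imp_div_less) (metis mod_less_divisor mult_zero_right not_gr_zero not_less_zero)
  next
    fix x assume "x \<in> {..<a}\<times>{..<b}"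
    then obtain k1 k2 where x: "x = (k1,k2)" "k1 < a" "k2 < b" by auto
    have "k1*b+k2 < a*b" using lt2[OF x(2) x(3)] by simp
    thus "(case x of (k1, k2) \<Rightarrow> k1 * b + k2) \<in> {..<a*b}" using x by simp
    show "((case x of (k1, k2) \<Rightarrow> k1 * b + k2) div b, (case x of (k1, k2) \<Rightarrow> k1 * b + k2) mod b) = x"
      using x by simp
  qed auto
  finally show ?thesis by simp
qed

lemma lt3: "(i1::nat) < n1 \<Longrightarrow> i2 < n2 \<Longrightarrow> i3 < n3 \<Longrightarrow> i1*(n2*n3)+i2*n3+i3 < n1*n2*n3"
proof -
  assume a: "i1 < n1" "i2 < n2" "i3 < n3"
  have "i1*(n2*n3)+i2*n3+i3 < i1*(n2*n3) + n2*n3" using lt2[OF a(2,3)] by simp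
  also have "\<dots> = (i1+1)*(n2*n3)" by simp
  also have "\<dots> \<le> n1*(n2*n3)" using a by (intro mult_le_mono1) simp
  finally show ?thesis by (simp add: mult.assoc)
qed

lemma kron_mult:
  fixes A B C D :: "'a::comm_semiring_1 mat"
  assumes "dim_col A = dim_row C" "dim_col B = dim_row D"
  shows "kron A B * kron C D = kron (A * C) (B * D)"
proof (rule eq_matI)
  fix i j assume "i < dim_row (kron (A * C) (B * D))" "j < dim_col (kron (A * C) (B * D))"
  hence i: "i < dim_row A * dim_row B" and j: "j < dim_col C * dim_col D" by auto
  have "(kron A B * kron C D) $$ (i,j) = (\<Sum>k<dim_col A * dim_col B. kron A B $$ (i,k) * kron C D $$ (k,j))"
    using i j assms by (subst mult_entry) auto
  also have "\<dots> = (\<Sum>k1<dim_col A. \<Sum>k2<dim_col B. kron A B $$ (i,k1*dim_col B+k2) * kron C D $$ (k1*dim_col B+k2,j))"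
    by (rule sum_split_prod)
  also have "\<dots> = (\<Sum>k1<dim_col A. \<Sum>k2<dim_col B.
      (A $$ (i div dim_row B, k1) * C $$ (k1, j div dim_col D)) * (B $$ (i mod dim_row B, k2) * D $$ (k2, j mod dim_col D)))"
  proof (intro sum.cong refl)
    fix k1 k2 assume k: "k1 \<in> {..<dim_col A}" "k2 \<in> {..<dim_col B}"
    have l: "k1*dim_col B+k2 < dim_col A * dim_col B" using lt2[of k1 "dim_col A" k2 "dim_col B"] k by simp
    show "kron A B $$ (i,k1*dim_col B+k2) * kron C D $$ (k1*dim_col B+k2,j) =
      (A $$ (i div dim_row B, k1) * C $$ (k1, j div dim_col D)) * (B $$ (i mod dim_row B, k2) * D $$ (k2, j mod dim_col D))"
      using i j l k assms by (simp add: kron_entry dm mult_ac)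
  qed
  also have "\<dots> = (A*C) $$ (i div dim_row B, j div dim_col D) * (B*D) $$ (i mod dim_row B, j mod dim_col D)"
    using div_lt[OF i] div_lt[OF j] mod_lt[OF i] mod_lt[OF j] assms
    by (simp add: mult_entry sum_product del: index_mult_mat(1))
  also have "\<dots> = kron (A * C) (B * D) $$ (i,j)" using i j by (simp add: kron_entry)
  finally show "(kron A B * kron C D) $$ (i,j) = kron (A * C) (B * D) $$ (i,j)" .
qed auto

lemma divmod_eq: "(i::nat) div b = j div b \<Longrightarrow> i mod b = j mod b \<Longrightarrow> i = j"
  by (metis div_mult_mod_eq)

lemma kron_one: "kron (1\<^sub>m a) (1\<^sub>m b) = (1\<^sub>m (a*b) :: 'a::semiring_1 mat)"
  by (rule eq_matI) (auto simp: kron_entry div_lt mod_lt dest: divmod_eq)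

lemma kron_dmat_one: "kron (dmat a f) (1\<^sub>m b) = (dmat (a*b) (\<lambda>i. f (i div b)) :: 'a::semiring_1 mat)"
  by (rule eq_matI) (auto simp: kron_entry div_lt mod_lt dmat_def dest: divmod_eq)

lemma kron_one_dmat: "kron (1\<^sub>m a) (dmat b f) = (dmat (a*b) (\<lambda>i. f (i mod b)) :: 'a::semiring_1 mat)"
  by (rule eq_matI) (auto simp: kron_entry div_lt mod_lt dmat_def dest: divmod_eq)

definition pmat :: "nat \<Rightarrow> (nat \<Rightarrow> nat) \<Rightarrow> 'a::semiring_1 mat" where
  "pmat n s = mat n n (\<lambda>(r,c). if r = s c then 1 else 0)"

lemma pmat_d_pmat:
  assumes "\<And>c. c < n \<Longrightarrow> s c < n \<and> t (s c) = c"
  shows "pmat n t * dmat n g * pmat n s = (dmat n (\<lambda>c. g (s c)) :: 'a::semiring_1 mat)"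
proof -
  have 1: "pmat n t * dmat n g = mat n n (\<lambda>(r,k). (if r = t k then 1 else 0) * g k)"
    by (subst dmat_mult_right) (auto simp: pmat_def intro!: eq_matI)
  show ?thesis unfolding 1
    by (rule eq_matI) (auto simp: mult_entry pmat_def dmat_def sum_delta_mult' assms simp del: index_mult_mat(1))
qed

definition fsig :: "nat \<Rightarrow> nat \<Rightarrow> nat \<Rightarrow> nat" where
  "fsig n2 n3 c = c div (n2*n3) * (n3*n2) + c mod n3 * n2 + (c div n3) mod n2"

lemma flipP_pmat: "flipP n1 n2 n3 = pmat (n1*n2*n3) (fsig n2 n3)"
  by (rule eq_matI) (auto simp: flipP_def pmat_def fsig_def Let_def)

lemma fsig_props:
  assumes "c < n1*n2*n3"
  shows "fsig n2 n3 c < n1*n2*n3" "fsig n3 n2 (fsig n2 n3 c) = c"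
    "fsig n2 n3 c div n2 = c div (n2*n3) * n3 + c mod n3"
proof -
  obtain i1 i2 i3 where i: "i1 < n1" "i2 < n2" "i3 < n3" and c: "c = i1*(n2*n3) + i2*n3 + i3"
    using decomp3[OF assms] by blast
  have f: "fsig n2 n3 c = i1*(n3*n2) + i3*n2 + i2"
    unfolding fsig_def c idx3[OF i(2,3)] by (simp add: dm i)
  show "fsig n2 n3 c < n1*n2*n3" unfolding f using lt3[OF i(1) i(3) i(2)] by (simp add: mult_ac)
  show "fsig n3 n2 (fsig n2 n3 c) = c"
    unfolding f unfolding fsig_def idx3[OF i(3,2)] using i by (simp add: dm c)
  show "fsig n2 n3 c div n2 = c div (n2*n3) * n3 + c mod n3"
    unfolding f unfolding idx3[OF i(3,2)] c idx3[OF i(2,3)] by simp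
qed

lemma leg13_dmat:
  "leg13 n1 n2 n3 (dmat (n1*n3) f) = (dmat (n1*n2*n3) (\<lambda>c. f (c div (n2*n3) * n3 + c mod n3)) :: 'a::semiring_1 mat)"
proof -
  have e: "n1*n3*n2 = n1*n2*n3" by (simp add: mult_ac)
  have "leg13 n1 n2 n3 (dmat (n1*n3) f) = pmat (n1*n2*n3) (fsig n3 n2) * dmat (n1*n2*n3) (\<lambda>i. f (i div n2)) * pmat (n1*n2*n3) (fsig n2 n3)"
    unfolding leg13_def flipP_pmat kron_dmat_one e ..
  also have "\<dots> = dmat (n1*n2*n3) (\<lambda>c. f (fsig n2 n3 c div n2))"
    by (rule pmat_d_pmat) (use fsig_props in auto)
  also have "\<dots> = dmat (n1*n2*n3) (\<lambda>c. f (c div (n2*n3) * n3 + c mod n3))"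
    by (rule eq_matI) (auto simp: dmat_def fsig_props)
  finally show ?thesis .
qed


lemma qpow_ne1: "\<forall>k::nat. k > 0 \<longrightarrow> q ^ k \<noteq> 1 \<Longrightarrow> k > 0 \<Longrightarrow> q ^ k \<noteq> 1" by auto

lemma qden: assumes q_nz: "(q::'a::field_char_0) \<noteq> 0" and q_nr: "\<forall>k::nat. k > 0 \<longrightarrow> q ^ k \<noteq> 1"
  shows "q - inverse q \<noteq> 0"
proof
  assume "q - inverse q = 0"
  hence "q * q = 1" using q_nz by (simp add: field_simps)
  thus False using qpow_ne1[OF q_nr, of 2] by (simp add: power2_eq_square)
qed

lemma qint0: "qint q 0 = 0" by (simp add: qint_def)

lemma qsum_ne: assumes q_nz: "(q::'a::field_char_0) \<noteq> 0" and q_nr: "\<forall>k::nat. k > 0 \<longrightarrow> q ^ k \<noteq> 1"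
  and xy0: "x + y > 0" shows "qint q x + qint q y \<noteq> 0"
proof
  assume h: "qint q x + qint q y = 0"
  have num: "q ^ x - inverse q ^ x + (q ^ y - inverse q ^ y) = 0"
    using h qden[OF q_nz q_nr] by (simp add: qint_def add_divide_distrib[symmetric])
  have "(q ^ x - inverse q ^ x + (q ^ y - inverse q ^ y)) * q ^ (x+y) = (q^x + q^y) * (q^(x+y) - 1)"
    using q_nz by (simp add: field_simps power_add power_inverse)
  hence "(q^x + q^y) * (q^(x+y) - 1) = 0" using num by simp
  moreover have "q^(x+y) - 1 \<noteq> 0" using qpow_ne1[OF q_nr xy0] by simp
  ultimately have s: "q^x + q^y = 0" by simp
  have H: "q^x + q^y \<noteq> 0" if xy: "x \<le> y" for x y
  proof
    assume "q^x + q^y = 0"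
    moreover have "q^y = q^x * q^(y-x)" using xy by (simp add: power_add[symmetric])
    ultimately have "q^x * (1 + q^(y-x)) = 0" by (simp add: algebra_simps)
    hence e: "q^(y-x) = -1" using q_nz by (simp add: add_eq_0_iff)
    show False
    proof (cases "y = x")
      case True thus False using e by simp
    next
      case False
      have "q^(2*(y-x)) = q^(y-x) * q^(y-x)" by (simp add: mult_2 power_add)
      hence "q^(2*(y-x)) = 1" using e by simp
      thus False using qpow_ne1[OF q_nr, of "2*(y-x)"] False xy by simp
    qed
  qed
  show False
  proof (cases "x \<le> y")
    case True thus False using H s by blast
  next
    case False
    hence "q^y + q^x \<noteq> 0" using H[of y x] by simp
    thus False using s by (simp add: add.commute)
  qed
qed

lemma qint_ne: assumes "(q::'a::field_char_0) \<noteq> 0" "\<forall>k::nat. k > 0 \<longrightarrow> q ^ k \<noteq> 1" "n > 0"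
  shows "qint q n \<noteq> 0"
  using qsum_ne[OF assms(1,2), of n 0] assms(3) by (simp add: qint0)

lemma FE_entry:
  assumes p: "p \<ge> 1" and r: "r < p+2" and c: "c < p+2" and k: "k < 2*p+2"
  shows "F0 sq q p $$ (r,k) * E0 sq q p $$ (k,c) =
    (if k = r then (if r = c \<and> r < p+1 then
        sq (qint q (p+1-r)) * sq (qint q (p+1)) / (qint q (p+1-r) + qint q r) * (sq (qint q (p+1-r)) / sq (qint q (p+1))) else 0) else 0)
  + (if k = r + p then (if r = c \<and> 1 \<le> r then
        sq (qint q r) * sq (qint q (p+1)) / (qint q (p+1-r) + qint q r) * (sq (qint q r) / sq (qint q (p+1))) else 0) else 0)"
  using p r c k unfolding F0_def E0_def
  by (auto simp: numeral_2_eq_2)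



lemma FE:
  fixes q :: "'a::field_char_0"
  assumes q_nz: "q \<noteq> 0" and q_nr: "\<forall>k::nat. k > 0 \<longrightarrow> q ^ k \<noteq> 1"
    and sq: "\<forall>x. sq x * sq x = x" and p: "p \<ge> 1"
  shows "F0 sq q p * E0 sq q p = 1\<^sub>m (p+2)"
proof (rule eq_matI)
  fix r c assume "r < dim_row (1\<^sub>m (p+2) :: 'a mat)" "c < dim_col (1\<^sub>m (p+2) :: 'a mat)"
  hence r: "r < p+2" and c: "c < p+2" by auto
  define D where "D = qint q (p+1-r) + qint q r"
  have D: "D \<noteq> 0" unfolding D_def using qsum_ne[OF q_nz q_nr, of "p+1-r" r] r by simp
  have sP: "sq (qint q (p+1)) \<noteq> 0"
  proof
    assume "sq (qint q (p+1)) = 0"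
    hence "qint q (p+1) = 0" using sq by (metis mult_zero_left)
    thus False using qint_ne[OF q_nz q_nr, of "p+1"] by simp
  qed
  define a where "a = sq (qint q (p+1-r)) * sq (qint q (p+1)) / D * (sq (qint q (p+1-r)) / sq (qint q (p+1)))"
  define b where "b = sq (qint q r) * sq (qint q (p+1)) / D * (sq (qint q r) / sq (qint q (p+1)))"
  have a: "a = qint q (p+1-r) / D" unfolding a_def using sP sq by (simp add: field_simps)
  have b: "b = qint q r / D" unfolding b_def using sP sq by (simp add: field_simps)
  have "(F0 sq q p * E0 sq q p) $$ (r,c) = (\<Sum>k<2*p+2. F0 sq q p $$ (r,k) * E0 sq q p $$ (k,c))"
    using r c by (subst mult_entry) auto
  also have "\<dots> = (\<Sum>k<2*p+2. (if k = r then (if r = c \<and> r < p+1 then a else 0) else 0)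
                               + (if k = r + p then (if r = c \<and> 1 \<le> r then b else 0) else 0))"
  proof (rule sum.cong[OF refl])
    fix k assume k: "k \<in> {..<2*p+2}"
    show "F0 sq q p $$ (r,k) * E0 sq q p $$ (k,c) = (if k = r then (if r = c \<and> r < p+1 then a else 0) else 0)
                               + (if k = r + p then (if r = c \<and> 1 \<le> r then b else 0) else 0)"
      unfolding a_def b_def D_def by (rule FE_entry[OF p r c]) (use k in simp)
  qed
  also have "\<dots> = (if r = c \<and> r < p+1 then a else 0) + (if r = c \<and> 1 \<le> r then b else 0)"
    using r by (simp add: sum.distrib)
  also have "\<dots> = (if r = c then 1 else 0)"
  proof (cases "r = c")
    case True
    have "(if r < p+1 then a else 0) + (if 1 \<le> r then b else 0) = a + b"
      using r by (cases "r = 0") (auto simp: a b qint0 D_def)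
    also have "\<dots> = 1" using D by (simp add: a b D_def add_divide_distrib[symmetric])
    finally show ?thesis using True by simp
  qed simp
  also have "\<dots> = 1\<^sub>m (p+2) $$ (r,c)" using r c by simp
  finally show "(F0 sq q p * E0 sq q p) $$ (r,c) = 1\<^sub>m (p+2) $$ (r,c)" .
qed auto


definition rh :: "'a::field \<Rightarrow> nat \<Rightarrow> nat \<Rightarrow> nat \<Rightarrow> 'a" where
  "rh qh n1 n2 r = qh powi ((int n1 - 2 * int (r div (n2+1))) * (int n2 - 2 * int (r mod (n2+1))))"

lemma Rhat_dmat: "Rhat qh n1 n2 = dmat ((n1+1)*(n2+1)) (rh qh n1 n2)"
  by (rule eq_matI) (auto simp: Rhat_def dmat_def rh_def)

lemma dmat_cong: "n = m \<Longrightarrow> (\<And>i. i < n \<Longrightarrow> f i = g i) \<Longrightarrow> dmat n f = dmat m g"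
  by (rule eq_matI) (auto simp: dmat_def)

lemma E0_nz:
  assumes "i < 2" "j < p+1" "E0 sq q p $$ (i*(p+1)+j, k) \<noteq> 0" "k < p+2"
  shows "k = i + j"
proof -
  have "i = 0 \<or> i = 1" using assms(1) by auto
  thus ?thesis using assms unfolding E0_def by (auto split: if_splits)
qed

lemma bnd_Rbase:
  fixes q qh :: "'a::field"
  assumes qh: "qh * qh = q" and qh0: "qh \<noteq> 0"
  shows "bnd 1 (Rbase q s)" "lc 1 (Rbase q s) = (s * qh) \<cdot>\<^sub>m Rhat qh 1 1"
    "dim_row (Rbase q s) = 4" "dim_col (Rbase q s) = 4"
proof -
  show "bnd 1 (Rbase q s)" by (auto simp: bnd_def Rbase_def cfun_def)
  show "dim_row (Rbase q s) = 4" "dim_col (Rbase q s) = 4" by (auto simp: Rbase_def)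
  have e: "r < 4 \<Longrightarrow> r = 0 \<or> r = 1 \<or> r = 2 \<or> r = 3" for r :: nat by auto
  show "lc 1 (Rbase q s) = (s * qh) \<cdot>\<^sub>m Rhat qh 1 1"
  proof (rule eq_matI)
    fix i j assume "i < dim_row ((s * qh) \<cdot>\<^sub>m Rhat qh 1 1)" "j < dim_col ((s * qh) \<cdot>\<^sub>m Rhat qh 1 1)"
    hence "i < 4" "j < 4" by (auto simp: Rhat_def)
    hence "i = 0 \<or> i = 1 \<or> i = 2 \<or> i = 3" "j = 0 \<or> j = 1 \<or> j = 2 \<or> j = 3" by auto
    have two: "Suc (Suc 0) = (2::nat)" by simp
    have f: "(2::nat) div 2 = 1" "(2::nat) mod 2 = 0" "(3::nat) div 2 = 1" "(3::nat) mod 2 = 1"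
      by simp_all
    thus "lc 1 (Rbase q s) $$ (i, j) = ((s * qh) \<cdot>\<^sub>m Rhat qh 1 1) $$ (i, j)"
      using \<open>i = 0 \<or> _\<close> \<open>j = 0 \<or> _\<close> f by (elim disjE) (simp_all add: lc_def Rbase_def cfun_def Rhat_def qh[symmetric] qh0 two)
  qed (auto simp: lc_def Rbase_def Rhat_def)
qed


lemma rh_val: "x = a*m + b \<Longrightarrow> m = n2+1 \<Longrightarrow> b < m \<Longrightarrow>
  rh qh n1 n2 x = qh powi ((int n1 - 2 * int a) * (int n2 - 2 * int b))"
proof -
  assume h: "x = a*m + b" "m = n2+1" "b < m"
  have "x div (n2+1) = a" "x mod (n2+1) = b" using dm[of b m a] h by simp_all
  thus ?thesis unfolding rh_def by simp
qed

lemma leg_dims[simp]: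
  "dim_row (leg12 n X) = dim_row X * n" "dim_col (leg12 n X) = dim_col X * n"
  "dim_row (leg23 n X) = n * dim_row X" "dim_col (leg23 n X) = n * dim_col X"
  "dim_row (leg13 n1 n2 n3 X) = n1*n3*n2" "dim_col (leg13 n1 n2 n3 X) = n1*n2*n3"
  by (auto simp: leg12_def leg23_def leg13_def)

lemma stepA:
  fixes q qh :: "'a::field_char_0"
  assumes q_nz: "q \<noteq> 0" and q_nr: "\<forall>k::nat. k > 0 \<longrightarrow> q ^ k \<noteq> 1"
    and sq: "\<forall>x. sq x * sq x = x" and qh0: "qh \<noteq> 0" and p: "p \<ge> 1"
    and R1: "dim_row R1 = 2*(p+1)" "dim_col R1 = 2*(p+1)" "bnd (int p) R1" "lc (int p) R1 = c1 \<cdot>\<^sub>m Rhat qh 1 p"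
    and R2: "dim_row R2 = 4" "dim_col R2 = 4" "bnd 1 R2" "lc 1 R2 = c2 \<cdot>\<^sub>m Rhat qh 1 1"
  defines "X \<equiv> leg23 2 (Fmat sq q p) * leg13 2 2 (p+1) R1 * leg12 (p+1) R2 * leg23 2 (Emat sq q p)"
  shows "dim_row X = 2*(p+2)" "dim_col X = 2*(p+2)" "bnd (int p + 1) X"
    "lc (int p + 1) X = (c1*c2) \<cdot>\<^sub>m Rhat qh 1 (p+1)"
proof -
  define N where "N = 2*2*(p+1)"
  define d1 where "d1 = (\<lambda>r. c1 * rh qh 1 p (r div (2*(p+1)) * (p+1) + r mod (p+1)))"
  define d2 where "d2 = (\<lambda>r. c2 * rh qh 1 1 (r div (p+1)))"
  have A: "bnd 0 (leg23 2 (Fmat sq q p))" "lc 0 (leg23 2 (Fmat sq q p)) = kron (1\<^sub>m 2) (F0 sq q p)"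
    unfolding Fmat_const using bnd_leg23[OF bnd_const(1)[of "F0 sq q p"], of 2] bnd_const(2)[of "F0 sq q p"] by auto
  have D: "bnd 0 (leg23 2 (Emat sq q p))" "lc 0 (leg23 2 (Emat sq q p)) = kron (1\<^sub>m 2) (E0 sq q p)"
    unfolding Emat_const using bnd_leg23[OF bnd_const(1)[of "E0 sq q p"], of 2] bnd_const(2)[of "E0 sq q p"] by auto
  have B: "bnd (int p) (leg13 2 2 (p+1) R1)" "lc (int p) (leg13 2 2 (p+1) R1) = dmat N d1"
  proof -
    show "bnd (int p) (leg13 2 2 (p+1) R1)" using bnd_leg13(1)[OF R1(3)] R1(1,2) by simp
    have "lc (int p) (leg13 2 2 (p+1) R1) = leg13 2 2 (p+1) (lc (int p) R1)"
      using bnd_leg13(2)[OF R1(3)] R1(1,2) unfolding leg13_def by simp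
    also have "lc (int p) R1 = dmat (2*(p+1)) (\<lambda>i. c1 * rh qh 1 p i)"
      unfolding R1(4) Rhat_dmat smult_dmat by (rule dmat_cong) auto
    also have "leg13 2 2 (p+1) (dmat (2*(p+1)) (\<lambda>i. c1 * rh qh 1 p i)) = dmat N d1"
      unfolding leg13_dmat N_def d1_def by simp
    finally show "lc (int p) (leg13 2 2 (p+1) R1) = dmat N d1" .
  qed
  have C: "bnd 1 (leg12 (p+1) R2)" "lc 1 (leg12 (p+1) R2) = dmat N d2"
  proof -
    show "bnd 1 (leg12 (p+1) R2)" using bnd_leg12(1)[OF R2(3)] .
    have "lc 1 (leg12 (p+1) R2) = kron (dmat ((1+1)*(1+1)) (\<lambda>i. c2 * rh qh 1 1 i)) (1\<^sub>m (p+1))"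
      using bnd_leg12(2)[OF R2(3)] unfolding R2(4) Rhat_dmat smult_dmat by simp
    also have "\<dots> = dmat N d2" unfolding kron_dmat_one N_def d2_def by (rule dmat_cong) auto
    finally show "lc 1 (leg12 (p+1) R2) = dmat N d2" .
  qed
  have AB: "bnd (int p) (leg23 2 (Fmat sq q p) * leg13 2 2 (p+1) R1)"
     "lc (int p) (leg23 2 (Fmat sq q p) * leg13 2 2 (p+1) R1) = kron (1\<^sub>m 2) (F0 sq q p) * dmat N d1"
    using bnd_mult[OF A(1) B(1)] A(2) B(2) R1(1,2) by (auto simp: algebra_simps)
  have ABC: "bnd (int p + 1) (leg23 2 (Fmat sq q p) * leg13 2 2 (p+1) R1 * leg12 (p+1) R2)"
     "lc (int p + 1) (leg23 2 (Fmat sq q p) * leg13 2 2 (p+1) R1 * leg12 (p+1) R2) = kron (1\<^sub>m 2) (F0 sq q p) * dmat N d1 * dmat N d2"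
    using bnd_mult[OF AB(1) C(1)] AB(2) C(2) R1(1,2) R2(1,2) by (auto simp: algebra_simps)
  have X: "bnd (int p + 1) X" "lc (int p + 1) X = kron (1\<^sub>m 2) (F0 sq q p) * dmat N d1 * dmat N d2 * kron (1\<^sub>m 2) (E0 sq q p)"
    using bnd_mult[OF ABC(1) D(1)] ABC(2) D(2) R1(1,2) R2(1,2) unfolding X_def by (auto simp: algebra_simps)
  show "bnd (int p + 1) X" by (rule X(1))
  show "dim_row X = 2*(p+2)" "dim_col X = 2*(p+2)" unfolding X_def by simp_all
  define dd where "dd = (\<lambda>c. (c1*c2) * rh qh 1 (p+1) c)"
  have comm: "dmat N (\<lambda>i. d1 i * d2 i) * kron (1\<^sub>m 2) (E0 sq q p) = kron (1\<^sub>m 2) (E0 sq q p) * dmat (2*(p+2)) dd"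
  proof (rule dmat_comm)
    show "dim_row (kron (1\<^sub>m 2) (E0 sq q p)) = N" "dim_col (kron (1\<^sub>m 2) (E0 sq q p)) = 2*(p+2)"
      unfolding N_def by simp_all
    fix r c assume r: "r < N" and c: "c < 2*(p+2)" and nz: "kron (1\<^sub>m 2) (E0 sq q p) $$ (r,c) \<noteq> 0"
    obtain i1 i2 i3 where i: "i1 < 2" "i2 < 2" "i3 < p+1" and rr: "r = i1*(2*(p+1)) + i2*(p+1) + i3"
      using decomp3[of r 2 2 "p+1"] r unfolding N_def by blast
    define j1 where "j1 = c div (p+2)"
    define j2 where "j2 = c mod (p+2)"
    have cc: "c = j1*(p+2) + j2" "j2 < p+2" unfolding j1_def j2_def
      by (rule div_mult_mod_eq[symmetric]) simp
    have j1: "j1 < 2" unfolding j1_def using c by (simp add: less_mult_imp_div_less)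
    have e2: "2*p+2 = 2*(p+1)" by simp
    have rdiv: "r div (2*p+2) = i1" "r mod (2*p+2) = i2*(p+1)+i3"
      unfolding e2 rr using idx3[OF i(2,3), of i1] by simp_all
    have "kron (1\<^sub>m 2) (E0 sq q p) $$ (r,c) = 1\<^sub>m 2 $$ (r div (2*p+2), c div (p+2)) * E0 sq q p $$ (r mod (2*p+2), c mod (p+2))"
      using kron_entry[of r "1\<^sub>m 2" "E0 sq q p" c] r c unfolding N_def by simp
    hence "kron (1\<^sub>m 2) (E0 sq q p) $$ (r,c) = 1\<^sub>m 2 $$ (i1, j1) * E0 sq q p $$ (i2*(p+1)+i3, j2)"
      unfolding rdiv j1_def[symmetric] j2_def[symmetric] .
    hence ij: "i1 = j1" "E0 sq q p $$ (i2*(p+1)+i3, j2) \<noteq> 0" using nz i j1 by (auto split: if_splits)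
    hence j2: "j2 = i2 + i3" using E0_nz[OF i(2,3) _ cc(2)] by simp
    have v1: "d1 r = c1 * qh powi ((1 - 2 * int i1) * (int p - 2 * int i3))"
    proof -
      have "r div (2*(p+1)) = i1" "r mod (p+1) = i3" unfolding rr using idx3[OF i(2,3), of i1] by simp_all
      thus ?thesis unfolding d1_def using rh_val[of _ i1 "p+1" i3 p qh 1] i by simp
    qed
    have v2: "d2 r = c2 * qh powi ((1 - 2 * int i1) * (1 - 2 * int i2))"
    proof -
      have "r div (p+1) = i1*2 + i2" unfolding rr using idx3[OF i(2,3), of i1] by simp
      moreover have "rh qh 1 1 (i1*2 + i2) = qh powi ((1 - 2 * int i1) * (1 - 2 * int i2))"
        using rh_val[of "i1*2 + i2" i1 2 i2 1 qh 1] i by simp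
      ultimately show ?thesis unfolding d2_def by simp
    qed
    have v3: "dd c = (c1*c2) * qh powi ((1 - 2 * int i1) * (int (p+1) - 2 * int (i2+i3)))"
      unfolding dd_def using rh_val[OF cc(1), of "p+1" qh 1] cc(2) ij(1) j2 by simp
    have ex: "(1 - 2 * int i1) * (int p - 2 * int i3) + (1 - 2 * int i1) * (1 - 2 * int i2)
       = (1 - 2 * int i1) * (int (p+1) - 2 * int (i2+i3))" by (simp add: algebra_simps)
    show "d1 r * d2 r = dd c" unfolding v1 v2 v3 ex[symmetric] power_int_add[OF disjI1[OF qh0]]
      by (simp add: mult_ac)
  qed
  have FE2: "kron (1\<^sub>m 2) (F0 sq q p) * kron (1\<^sub>m 2) (E0 sq q p) = 1\<^sub>m (2*(p+2))"
    by (subst kron_mult) (simp_all add: FE[OF q_nz q_nr sq p] kron_one)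
  have cF: "kron (1\<^sub>m 2) (F0 sq q p) \<in> carrier_mat (2*(p+2)) N" unfolding N_def by auto
  have cD1: "dmat N d1 \<in> carrier_mat N N" "dmat N d2 \<in> carrier_mat N N" by auto
  have cE: "kron (1\<^sub>m 2) (E0 sq q p) \<in> carrier_mat N (2*(p+2))" unfolding N_def by auto
  have "lc (int p + 1) X = kron (1\<^sub>m 2) (F0 sq q p) * (dmat N d1 * dmat N d2 * kron (1\<^sub>m 2) (E0 sq q p))"
    unfolding X(2) using cF cD1 cE by (simp add: assoc_mult_mat[of _ _ N _ N])
  also have "\<dots> = kron (1\<^sub>m 2) (F0 sq q p) * (kron (1\<^sub>m 2) (E0 sq q p) * dmat (2*(p+2)) dd)"
    unfolding dmat_mult comm ..
  also have "\<dots> = dmat (2*(p+2)) dd"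
  proof -
    have cDd: "dmat (2*(p+2)) dd \<in> carrier_mat (2*(p+2)) (2*(p+2))" by (rule carrier_matI) simp_all
    have "kron (1\<^sub>m 2) (F0 sq q p) * (kron (1\<^sub>m 2) (E0 sq q p) * dmat (2*(p+2)) dd)
      = (kron (1\<^sub>m 2) (F0 sq q p) * kron (1\<^sub>m 2) (E0 sq q p)) * dmat (2*(p+2)) dd"
      by (rule assoc_mult_mat[OF cF cE cDd, symmetric])
    also have "\<dots> = dmat (2*(p+2)) dd" unfolding FE2 by (rule left_mult_one_mat[OF cDd])
    finally show ?thesis .
  qed
  also have "\<dots> = (c1*c2) \<cdot>\<^sub>m Rhat qh 1 (p+1)"
    unfolding Rhat_dmat smult_dmat dd_def by (rule dmat_cong) auto
  finally show "lc (int p + 1) X = (c1*c2) \<cdot>\<^sub>m Rhat qh 1 (p+1)" .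
qed


lemma stepB:
  fixes q qh :: "'a::field_char_0"
  assumes q_nz: "q \<noteq> 0" and q_nr: "\<forall>k::nat. k > 0 \<longrightarrow> q ^ k \<noteq> 1"
    and sq: "\<forall>x. sq x * sq x = x" and qh0: "qh \<noteq> 0" and p: "p \<ge> 1"
    and R1: "dim_row R1 = 2*(n2+1)" "dim_col R1 = 2*(n2+1)" "bnd (int n2) R1" "lc (int n2) R1 = c1 \<cdot>\<^sub>m Rhat qh 1 n2"
    and R2: "dim_row R2 = (p+1)*(n2+1)" "dim_col R2 = (p+1)*(n2+1)" "bnd (int (p*n2)) R2" "lc (int (p*n2)) R2 = c2 \<cdot>\<^sub>m Rhat qh p n2"
  defines "X \<equiv> leg12 (n2+1) (Fmat sq q p) * leg13 2 (p+1) (n2+1) R1 * leg23 2 R2 * leg12 (n2+1) (Emat sq q p)"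
  shows "dim_row X = (p+2)*(n2+1)" "dim_col X = (p+2)*(n2+1)" "bnd (int ((p+1)*n2)) X"
    "lc (int ((p+1)*n2)) X = (c1*c2) \<cdot>\<^sub>m Rhat qh (p+1) n2"
proof -
  define N where "N = 2*(p+1)*(n2+1)"
  define d1 where "d1 = (\<lambda>r. c1 * rh qh 1 n2 (r div ((p+1)*(n2+1)) * (n2+1) + r mod (n2+1)))"
  define d2 where "d2 = (\<lambda>r. c2 * rh qh p n2 (r mod ((p+1)*(n2+1))))"
  have A: "bnd 0 (leg12 (n2+1) (Fmat sq q p))" "lc 0 (leg12 (n2+1) (Fmat sq q p)) = kron (F0 sq q p) (1\<^sub>m (n2+1))"
    unfolding Fmat_const using bnd_leg12[OF bnd_const(1)[of "F0 sq q p"], of "n2+1"] bnd_const(2)[of "F0 sq q p"] by auto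
  have D: "bnd 0 (leg12 (n2+1) (Emat sq q p))" "lc 0 (leg12 (n2+1) (Emat sq q p)) = kron (E0 sq q p) (1\<^sub>m (n2+1))"
    unfolding Emat_const using bnd_leg12[OF bnd_const(1)[of "E0 sq q p"], of "n2+1"] bnd_const(2)[of "E0 sq q p"] by auto
  have B: "bnd (int n2) (leg13 2 (p+1) (n2+1) R1)" "lc (int n2) (leg13 2 (p+1) (n2+1) R1) = dmat N d1"
  proof -
    show "bnd (int n2) (leg13 2 (p+1) (n2+1) R1)" using bnd_leg13(1)[OF R1(3)] R1(1,2) by simp
    have "lc (int n2) (leg13 2 (p+1) (n2+1) R1) = leg13 2 (p+1) (n2+1) (lc (int n2) R1)"
      using bnd_leg13(2)[OF R1(3)] R1(1,2) unfolding leg13_def by simp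
    also have "lc (int n2) R1 = dmat (2*(n2+1)) (\<lambda>i. c1 * rh qh 1 n2 i)"
      unfolding R1(4) Rhat_dmat smult_dmat by (rule dmat_cong) auto
    also have "leg13 2 (p+1) (n2+1) (dmat (2*(n2+1)) (\<lambda>i. c1 * rh qh 1 n2 i)) = dmat N d1"
      unfolding leg13_dmat N_def d1_def by simp
    finally show "lc (int n2) (leg13 2 (p+1) (n2+1) R1) = dmat N d1" .
  qed
  have C: "bnd (int (p*n2)) (leg23 2 R2)" "lc (int (p*n2)) (leg23 2 R2) = dmat N d2"
  proof -
    show "bnd (int (p*n2)) (leg23 2 R2)" using bnd_leg23(1)[OF R2(3)] .
    have "lc (int (p*n2)) (leg23 2 R2) = kron (1\<^sub>m 2) (dmat ((p+1)*(n2+1)) (\<lambda>i. c2 * rh qh p n2 i))"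
      using bnd_leg23(2)[OF R2(3)] unfolding R2(4) Rhat_dmat smult_dmat by simp
    also have "\<dots> = dmat N d2" unfolding kron_one_dmat N_def d2_def by (rule dmat_cong) auto
    finally show "lc (int (p*n2)) (leg23 2 R2) = dmat N d2" .
  qed
  have AB: "bnd (int n2) (leg12 (n2+1) (Fmat sq q p) * leg13 2 (p+1) (n2+1) R1)"
     "lc (int n2) (leg12 (n2+1) (Fmat sq q p) * leg13 2 (p+1) (n2+1) R1) = kron (F0 sq q p) (1\<^sub>m (n2+1)) * dmat N d1"
    using bnd_mult[OF A(1) B(1)] A(2) B(2) R1(1,2) by (auto simp: algebra_simps)
  have ABC: "bnd (int ((p+1)*n2)) (leg12 (n2+1) (Fmat sq q p) * leg13 2 (p+1) (n2+1) R1 * leg23 2 R2)"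
     "lc (int ((p+1)*n2)) (leg12 (n2+1) (Fmat sq q p) * leg13 2 (p+1) (n2+1) R1 * leg23 2 R2) = kron (F0 sq q p) (1\<^sub>m (n2+1)) * dmat N d1 * dmat N d2"
    using bnd_mult[OF AB(1) C(1)] AB(2) C(2) R1(1,2) R2(1,2) by (auto simp: algebra_simps)
  have X: "bnd (int ((p+1)*n2)) X" "lc (int ((p+1)*n2)) X = kron (F0 sq q p) (1\<^sub>m (n2+1)) * dmat N d1 * dmat N d2 * kron (E0 sq q p) (1\<^sub>m (n2+1))"
    using bnd_mult[OF ABC(1) D(1)] ABC(2) D(2) R1(1,2) R2(1,2) unfolding X_def by (auto simp: algebra_simps)
  show "bnd (int ((p+1)*n2)) X" by (rule X(1))
  show "dim_row X = (p+2)*(n2+1)" "dim_col X = (p+2)*(n2+1)" unfolding X_def by simp_all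
  define dd where "dd = (\<lambda>c. (c1*c2) * rh qh (p+1) n2 c)"
  have comm: "dmat N (\<lambda>i. d1 i * d2 i) * kron (E0 sq q p) (1\<^sub>m (n2+1)) = kron (E0 sq q p) (1\<^sub>m (n2+1)) * dmat ((p+2)*(n2+1)) dd"
  proof (rule dmat_comm)
    show "dim_row (kron (E0 sq q p) (1\<^sub>m (n2+1))) = N" "dim_col (kron (E0 sq q p) (1\<^sub>m (n2+1))) = (p+2)*(n2+1)"
      unfolding N_def by (simp_all add: algebra_simps)
    fix r c assume r: "r < N" and c: "c < (p+2)*(n2+1)" and nz: "kron (E0 sq q p) (1\<^sub>m (n2+1)) $$ (r,c) \<noteq> 0"
    obtain i1 i2 i3 where i: "i1 < 2" "i2 < p+1" "i3 < n2+1" and rr: "r = i1*((p+1)*(n2+1)) + i2*(n2+1) + i3"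
      using decomp3[of r 2 "p+1" "n2+1"] r unfolding N_def by blast
    define k where "k = c div (n2+1)"
    define j3 where "j3 = c mod (n2+1)"
    have cc: "c = k*(n2+1) + j3" "j3 < n2+1" unfolding k_def j3_def
      by (rule div_mult_mod_eq[symmetric]) simp
    have k: "k < p+2" unfolding k_def using c by (simp add: less_mult_imp_div_less)
    have rdiv: "r div (n2+1) = i1*(p+1) + i2" "r mod (n2+1) = i3"
      unfolding rr using idx3[OF i(2,3), of i1] by simp_all
    have "kron (E0 sq q p) (1\<^sub>m (n2+1)) $$ (r,c) = E0 sq q p $$ (r div (n2+1), c div (n2+1)) * 1\<^sub>m (n2+1) $$ (r mod (n2+1), c mod (n2+1))"
      using kron_entry[of r "E0 sq q p" "1\<^sub>m (n2+1)" c] r c unfolding N_def by (simp add: algebra_simps)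
    hence "kron (E0 sq q p) (1\<^sub>m (n2+1)) $$ (r,c) = E0 sq q p $$ (i1*(p+1) + i2, k) * 1\<^sub>m (n2+1) $$ (i3, j3)"
      unfolding rdiv k_def[symmetric] j3_def[symmetric] .
    hence ij: "i3 = j3" "E0 sq q p $$ (i1*(p+1)+i2, k) \<noteq> 0" using nz i cc(2) by (auto split: if_splits)
    hence kk: "k = i1 + i2" using E0_nz[OF i(1,2) _ k] by simp
    have v1: "d1 r = c1 * qh powi ((1 - 2 * int i1) * (int n2 - 2 * int i3))"
    proof -
      have "r div ((p+1)*(n2+1)) = i1" unfolding rr using idx3[OF i(2,3), of i1] by simp
      thus ?thesis unfolding d1_def rdiv using rh_val[of _ i1 "n2+1" i3 n2 qh 1] i by simp
    qed
    have v2: "d2 r = c2 * qh powi ((int p - 2 * int i2) * (int n2 - 2 * int i3))"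
    proof -
      have "r mod ((p+1)*(n2+1)) = i2*(n2+1) + i3" unfolding rr using idx3[OF i(2,3), of i1] by simp
      thus ?thesis unfolding d2_def using rh_val[of _ i2 "n2+1" i3 n2 qh p] i by simp
    qed
    have v3: "dd c = (c1*c2) * qh powi ((int (p+1) - 2 * int (i1+i2)) * (int n2 - 2 * int i3))"
      unfolding dd_def using rh_val[OF cc(1), of n2 qh "p+1"] cc(2) ij(1) kk by simp
    have ex: "(1 - 2 * int i1) * (int n2 - 2 * int i3) + (int p - 2 * int i2) * (int n2 - 2 * int i3)
       = (int (p+1) - 2 * int (i1+i2)) * (int n2 - 2 * int i3)" by (simp add: algebra_simps)
    show "d1 r * d2 r = dd c" unfolding v1 v2 v3 ex[symmetric] power_int_add[OF disjI1[OF qh0]]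
      by (simp add: mult_ac)
  qed
  have FE2: "kron (F0 sq q p) (1\<^sub>m (n2+1)) * kron (E0 sq q p) (1\<^sub>m (n2+1)) = 1\<^sub>m ((p+2)*(n2+1))"
    by (subst kron_mult) (simp_all add: FE[OF q_nz q_nr sq p] kron_one)
  have cF: "kron (F0 sq q p) (1\<^sub>m (n2+1)) \<in> carrier_mat ((p+2)*(n2+1)) N" unfolding N_def by (auto simp: algebra_simps)
  have cD1: "dmat N d1 \<in> carrier_mat N N" "dmat N d2 \<in> carrier_mat N N" by auto
  have cE: "kron (E0 sq q p) (1\<^sub>m (n2+1)) \<in> carrier_mat N ((p+2)*(n2+1))" unfolding N_def by (auto simp: algebra_simps)
  have "lc (int ((p+1)*n2)) X = kron (F0 sq q p) (1\<^sub>m (n2+1)) * (dmat N d1 * dmat N d2 * kron (E0 sq q p) (1\<^sub>m (n2+1)))"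
    unfolding X(2) using cF cD1 cE by (simp add: assoc_mult_mat[of _ _ N _ N])
  also have "\<dots> = kron (F0 sq q p) (1\<^sub>m (n2+1)) * (kron (E0 sq q p) (1\<^sub>m (n2+1)) * dmat ((p+2)*(n2+1)) dd)"
    unfolding dmat_mult comm ..
  also have "\<dots> = dmat ((p+2)*(n2+1)) dd"
  proof -
    have cDd: "dmat ((p+2)*(n2+1)) dd \<in> carrier_mat ((p+2)*(n2+1)) ((p+2)*(n2+1))" by (rule carrier_matI) simp_all
    have "kron (F0 sq q p) (1\<^sub>m (n2+1)) * (kron (E0 sq q p) (1\<^sub>m (n2+1)) * dmat ((p+2)*(n2+1)) dd)
      = (kron (F0 sq q p) (1\<^sub>m (n2+1)) * kron (E0 sq q p) (1\<^sub>m (n2+1))) * dmat ((p+2)*(n2+1)) dd"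
      by (rule assoc_mult_mat[OF cF cE cDd, symmetric])
    also have "\<dots> = dmat ((p+2)*(n2+1)) dd" unfolding FE2 by (rule left_mult_one_mat[OF cDd])
    finally show ?thesis .
  qed
  also have "\<dots> = (c1*c2) \<cdot>\<^sub>m Rhat qh (p+1) n2"
    unfolding Rhat_dmat smult_dmat dd_def by (rule dmat_cong) auto
  finally show "lc (int ((p+1)*n2)) X = (c1*c2) \<cdot>\<^sub>m Rhat qh (p+1) n2" .
qed


lemma R1n:
  fixes q qh :: "'a::field_char_0"
  assumes q_nz: "q \<noteq> 0" and q_nr: "\<forall>k::nat. k > 0 \<longrightarrow> q ^ k \<noteq> 1"
    and sq: "\<forall>x. sq x * sq x = x" and qh: "qh * qh = q" and n: "n \<ge> 1"
  shows "dim_row (Rmat sq q qh 1 n s) = 2*(n+1) \<and> dim_col (Rmat sq q qh 1 n s) = 2*(n+1)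
     \<and> bnd (int n) (Rmat sq q qh 1 n s) \<and> lc (int n) (Rmat sq q qh 1 n s) = (s^n * qh^n) \<cdot>\<^sub>m Rhat qh 1 n"
  using n
proof (induction n arbitrary: s rule: nat_induct_at_least)
  case base
  have qh0: "qh \<noteq> 0" using qh q_nz by auto
  show ?case using bnd_Rbase[OF qh qh0, of s] by simp
next
  case (Suc n)
  have qh0: "qh \<noteq> 0" using qh q_nz by auto
  obtain n' where n': "n = Suc n'" using Suc.hyps by (cases n) auto
  have eq: "Rmat sq q qh 1 (Suc n) s = leg23 2 (Fmat sq q n) * leg13 2 2 (n+1) (Rmat sq q qh 1 n (inverse qh * s))
      * leg12 (n+1) (Rmat sq q qh 1 1 (qh ^ n * s)) * leg23 2 (Emat sq q n)"
    by (simp add: n')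
  note I1 = Suc.IH[of "inverse qh * s"]
  have I2: "dim_row (Rmat sq q qh 1 1 (qh ^ n * s)) = 4" "dim_col (Rmat sq q qh 1 1 (qh ^ n * s)) = 4"
    "bnd 1 (Rmat sq q qh 1 1 (qh ^ n * s))" "lc 1 (Rmat sq q qh 1 1 (qh ^ n * s)) = ((qh ^ n * s) * qh) \<cdot>\<^sub>m Rhat qh 1 1"
    using bnd_Rbase[OF qh qh0, of "qh ^ n * s"] by simp_all
  note S = stepA[OF q_nz q_nr sq qh0 Suc.hyps, of "Rmat sq q qh 1 n (inverse qh * s)" "(inverse qh * s)^n * qh^n"
      "Rmat sq q qh 1 1 (qh ^ n * s)" "(qh ^ n * s) * qh"]
  have cc: "(inverse qh * s)^n * qh^n * ((qh ^ n * s) * qh) = s^(Suc n) * qh^(Suc n)"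
    using qh0 by (simp add: power_mult_distrib field_simps)
  have e: "int (Suc n) = int n + 1" by simp
  show ?case unfolding eq e using S I1 I2 cc by simp
qed


lemma Rmn:
  fixes q qh :: "'a::field_char_0"
  assumes q_nz: "q \<noteq> 0" and q_nr: "\<forall>k::nat. k > 0 \<longrightarrow> q ^ k \<noteq> 1"
    and sq: "\<forall>x. sq x * sq x = x" and qh: "qh * qh = q" and n1: "n1 \<ge> 1" and n2: "n2 \<ge> 1"
  shows "dim_row (Rmat sq q qh n1 n2 s) = (n1+1)*(n2+1) \<and> dim_col (Rmat sq q qh n1 n2 s) = (n1+1)*(n2+1)
     \<and> bnd (int (n1*n2)) (Rmat sq q qh n1 n2 s) \<and> lc (int (n1*n2)) (Rmat sq q qh n1 n2 s) = (s^(n1*n2) * qh^(n1*n2)) \<cdot>\<^sub>m Rhat qh n1 n2"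
  using n1
proof (induction n1 arbitrary: s rule: nat_induct_at_least)
  case base
  show ?case using R1n[OF q_nz q_nr sq qh n2, of s] by simp
next
  case (Suc p)
  have qh0: "qh \<noteq> 0" using qh q_nz by auto
  obtain m where m: "p = Suc m" using Suc.hyps by (cases p) auto
  have eq: "Rmat sq q qh (Suc p) n2 s = leg12 (n2+1) (Fmat sq q p) * leg13 2 (p+1) (n2+1) (Rmat sq q qh 1 n2 (inverse qh ^ p * s))
      * leg23 2 (Rmat sq q qh p n2 (qh * s)) * leg12 (n2+1) (Emat sq q p)"
    by (simp add: m)
  note I2 = Suc.IH[of "qh * s"]
  note I1 = R1n[OF q_nz q_nr sq qh n2, of "inverse qh ^ p * s"]
  note S = stepB[OF q_nz q_nr sq qh0 Suc.hyps, where ?n2.0=n2 and ?R1.0="Rmat sq q qh 1 n2 (inverse qh ^ p * s)" and ?c1.0="(inverse qh ^ p * s)^n2 * qh^n2"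
      and ?R2.0="Rmat sq q qh p n2 (qh * s)" and ?c2.0="(qh * s)^(p*n2) * qh^(p*n2)"]
  have cc: "(inverse qh ^ p * s)^n2 * qh^n2 * ((qh * s)^(p*n2) * qh^(p*n2)) = s^(Suc p * n2) * qh^(Suc p * n2)"
  proof -
    have "(inverse qh ^ p)^n2 * qh^(p*n2) = 1" using qh0
      by (simp add: power_mult[symmetric] power_inverse)
    hence "(inverse qh ^ p * s)^n2 * qh^n2 * ((qh * s)^(p*n2) * qh^(p*n2))
       = (s^n2 * s^(p*n2)) * (qh^n2 * qh^(p*n2)) * ((inverse qh ^ p)^n2 * qh^(p*n2))"
      by (simp add: power_mult_distrib mult_ac)
    also have "\<dots> = s^(Suc p * n2) * qh^(Suc p * n2)"
      using \<open>(inverse qh ^ p)^n2 * qh^(p*n2) = 1\<close> by (simp add: power_add[symmetric])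
    finally show ?thesis .
  qed
  have e: "Suc p + 1 = p + 2" by simp
  show ?case unfolding eq using S I1 I2 cc by (simp add: algebra_simps)
qed

theorem proposition5p3:
  fixes q qh :: "'a::field_char_0" and sq :: "'a \<Rightarrow> 'a" and n1 n2 :: nat
  assumes all_sqrt: "\<forall>x::'a. \<exists>y. y * y = x"
    and q_nz: "q \<noteq> 0"
    and q_not_root: "\<forall>k::nat. k > 0 \<longrightarrow> q ^ k \<noteq> 1"
    and qh: "qh * qh = q"
    and sq: "\<forall>x. sq x * sq x = x"
    and n1: "n1 \<ge> 1" and n2: "n2 \<ge> 1"
  shows "(\<forall>i j k. i < dim_row (Rmat sq q qh n1 n2 1) \<longrightarrow> j < dim_col (Rmat sq q qh n1 n2 1)
            \<longrightarrow> int (n1 * n2) < k \<longrightarrow> fls_nth (Rmat sq q qh n1 n2 1 $$ (i,j)) k = 0)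
       \<and> map_mat (\<lambda>f. fls_nth f (int (n1 * n2))) (Rmat sq q qh n1 n2 1)
           = (qh ^ (n1 * n2)) \<cdot>\<^sub>m Rhat qh n1 n2"
  using Rmn[OF q_nz q_not_root sq qh n1 n2, of 1] unfolding bnd_def lc_def by simp

end
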